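(* Fix constants $\mu_1,\ldots,\mu_M\ge 0$ and $P_1^{\rm ST},\ldots,P_K^{\rm ST}>0$. For a channel realization $\boldsymbol{\alpha}$ consider the problem $$\max_{p_1,\ldots,p_K}\ \log\Big(1+\sum_{k=1}^K h_kp_k\Big)-\sum_{m=1}^M\mu_m\sum_{k=1}^K g_{km}p_k\quad\text{s.t.}\quad 0\le p_k\le P_k^{\rm ST}\ \ \forall k.$$ For almost every realization $\boldsymbol{\alpha}$: if $(p_1^*,\ldots,p_K^* )$ is an optimal solution and $i,j$ are users with $p_i^*>0$ and $p_j^*=0$, then $$\frac{h_i}{\sum_{m=1}^M\mu_m g_{im}}\ \ge\ \frac{h_j}{\sum_{m=1}^M\mu_m g_{jm}}.$$
   Context: $\boldsymbol{\alpha}=(h_1,\ldots,h_K,g_{11},\ldots,g_{KM})$ is a random vector of nonnegative channel power gains ($h_k$: secondary user $k$ to secondary base station; $g_{km}$: secondary user $k$ to primary receiver $m$) with a continuous, differentiable joint cumulative distribution function, the $h_k$'s and $g_{km}$'s being independent. Convention: $x/0=+\infty$ for $x>0$. *)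

theory Defs
  imports "HOL-Probability.Probability"
begin

text \<open>Users are indexed by a finite type 'k (K = CARD('k)), primary receivers by a
finite type 'm (M = CARD('m)).  A channel realization is a pair
(h, g) :: (real^'k) \<times> (real^('k \<times> 'm)) with h $ k = h_k and g $ (k,m) = g_km.\<close>

definition feasible_power :: "real^'k \<Rightarrow> real^'k \<Rightarrow> bool" where
  "feasible_power Pst p \<longleftrightarrow> (\<forall>k. 0 \<le> p $ k \<and> p $ k \<le> Pst $ k)"

definition objective ::
  "real^'m \<Rightarrow> real^'k \<Rightarrow> real^('k \<times> 'm) \<Rightarrow> real^'k \<Rightarrow> real" where
  "objective \<mu> h g p =
     ln (1 + (\<Sum>k\<in>UNIV. h $ k * p $ k))
     - (\<Sum>m\<in>UNIV. \<mu> $ m * (\<Sum>k\<in>UNIV. g $ (k, m) * p $ k))"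

definition is_optimal ::
  "real^'m \<Rightarrow> real^'k \<Rightarrow> real^'k \<Rightarrow> real^('k \<times> 'm) \<Rightarrow> real^'k \<Rightarrow> bool" where
  "is_optimal \<mu> Pst h g p \<longleftrightarrow>
     feasible_power Pst p \<and>
     (\<forall>q. feasible_power Pst q \<longrightarrow> objective \<mu> h g q \<le> objective \<mu> h g p)"

text \<open>Extended-real quotient with the convention x / 0 = +\<infinity> (also used for 0/0,
which only occurs on a null set).\<close>
definition ediv :: "real \<Rightarrow> real \<Rightarrow> ereal" where
  "ediv x y = (if y = 0 then PInfty else ereal (x / y))"

definition joint_cdf ::
  "'a measure \<Rightarrow> ('a \<Rightarrow> (real^'k::finite) \<times> (real^('k \<times> 'm::finite))) \<Rightarrow> (real^'k) \<times> (real^('k \<times> 'm)) \<Rightarrow> real" where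
    "joint_cdf M \<alpha> z = measure M {\<omega> \<in> space M.
      (\<forall>k. fst (\<alpha> \<omega>) $ k \<le> fst z $ k) \<and> (\<forall>km. snd (\<alpha> \<omega>) $ km \<le> snd z $ km)}"

definition alpha_comp ::
  "('a \<Rightarrow> (real^'k::finite) \<times> (real^('k \<times> 'm::finite))) \<Rightarrow> 'k + ('k \<times> 'm) \<Rightarrow> 'a \<Rightarrow> real" where
  "alpha_comp \<alpha> i \<omega> = (case i of Inl k \<Rightarrow> fst (\<alpha> \<omega>) $ k | Inr km \<Rightarrow> snd (\<alpha> \<omega>) $ km)"

end

theory Submission imports Defs begin

lemma lim_le:
  fixes x y C d :: real
  assumes "0 < d" "0 \<le> C" "\<forall>t. 0 < t \<and> t \<le> d \<longrightarrow> x \<le> y + C * t"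
  shows "x \<le> y"
proof (rule ccontr)
  assume "\<not> x \<le> y"
  define t where "t = min d ((x - y) / (2 * (C + 1)))"
  have t0: "0 < t" "t \<le> d" using assms \<open>\<not> x \<le> y\<close> by (auto simp: t_def)
  have "t \<le> (x - y) / (2 * (C + 1))" by (simp add: t_def)
  hence "2 * ((C+1) * t) \<le> x - y" using assms by (simp add: field_simps)
  moreover have "C * t \<le> (C+1) * t" "0 < (C+1) * t" using t0 assms by (simp add: algebra_simps, simp)
  ultimately have "C * t < x - y" using \<open>\<not> x \<le> y\<close> by linarith
  with assms t0 show False by force
qed

lemma sum_upd:
  fixes f :: "'k::finite \<Rightarrow> real"
  shows "(\<Sum>k\<in>UNIV. f k * (if k = l then v else p $ k)) = (\<Sum>k\<in>UNIV. f k * p $ k) + f l * (v - p $ l)"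
proof -
  have "(\<Sum>k\<in>UNIV. f k * (if k = l then v else p $ k)) = (\<Sum>k\<in>UNIV. f k * p $ k + (if k = l then f l * (v - p $ l) else 0))"
    by (rule sum.cong) (auto simp: algebra_simps)
  also have "\<dots> = (\<Sum>k\<in>UNIV. f k * p $ k) + f l * (v - p $ l)"
    by (simp add: sum.distrib)
  finally show ?thesis .
qed

lemma obj_alt:
  "objective \<mu> h g p = ln (1 + (\<Sum>k\<in>UNIV. h $ k * p $ k)) - (\<Sum>k\<in>UNIV. (\<Sum>m\<in>UNIV. \<mu> $ m * g $ (k, m)) * p $ k)"
proof -
  have "(\<Sum>m\<in>UNIV. \<mu> $ m * (\<Sum>k\<in>UNIV. g $ (k, m) * p $ k)) = (\<Sum>m\<in>UNIV. \<Sum>k\<in>UNIV. \<mu> $ m * g $ (k, m) * p $ k)"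
    by (simp add: sum_distrib_left mult.assoc)
  also have "\<dots> = (\<Sum>k\<in>UNIV. \<Sum>m\<in>UNIV. \<mu> $ m * g $ (k, m) * p $ k)" by (rule sum.swap)
  also have "\<dots> = (\<Sum>k\<in>UNIV. (\<Sum>m\<in>UNIV. \<mu> $ m * g $ (k, m)) * p $ k)"
    by (simp add: sum_distrib_right)
  finally show ?thesis by (simp add: objective_def)
qed

lemma ln_lower: "0 < a \<Longrightarrow> 0 < (b::real) \<Longrightarrow> 1 - a / b \<le> ln b - ln a"
  using ln_le_minus_one[of "a/b"] by (simp add: ln_div)

lemma det:
  fixes h :: "real^'k::finite" and g :: "real^('k \<times> 'm::finite)" and \<mu> :: "real^'m"
  assumes hn: "\<forall>k. 0 \<le> h $ k" and gn: "\<forall>km. 0 \<le> g $ km" and mn: "\<forall>m. 0 \<le> \<mu> $ m"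
    and P: "\<forall>k. 0 < Pst $ k" and hz: "\<forall>j. h $ j \<noteq> 0"
    and opt: "is_optimal \<mu> Pst h g p" and pi: "0 < p $ i" and pj: "p $ j = 0"
  shows "ediv (h $ i) (\<Sum>m\<in>UNIV. \<mu> $ m * g $ (i, m)) \<ge> ediv (h $ j) (\<Sum>m\<in>UNIV. \<mu> $ m * g $ (j, m))"
proof -
  define c where "c k = (\<Sum>m\<in>UNIV. \<mu> $ m * g $ (k, m))" for k
  define S where "S = 1 + (\<Sum>k\<in>UNIV. h $ k * p $ k)"
  define C where "C = (\<Sum>k\<in>UNIV. c k * p $ k)"
  have feas: "feasible_power Pst p" and best: "\<And>q. feasible_power Pst q \<Longrightarrow> objective \<mu> h g q \<le> objective \<mu> h g p"
    using opt by (auto simp: is_optimal_def)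
  have pn: "\<And>k. 0 \<le> p $ k" "\<And>k. p $ k \<le> Pst $ k" using feas by (auto simp: feasible_power_def)
  have c0: "\<And>k. 0 \<le> c k" unfolding c_def using mn gn by (auto intro!: sum_nonneg)
  have S1: "1 \<le> S" unfolding S_def using hn pn by (auto intro!: sum_nonneg)
  have objp: "objective \<mu> h g p = ln S - C" by (simp add: obj_alt S_def C_def c_def)
  have objq: "objective \<mu> h g (\<chi> k. if k = l then v else p $ k) = ln (S + h $ l * (v - p $ l)) - (C + c l * (v - p $ l))" for l v
    by (simp add: obj_alt sum_upd S_def C_def c_def add.assoc)
  have cl1: "h $ j \<le> c j * S"
  proof (rule lim_le[of "Pst $ j" "c j * h $ j"])
    show "0 < Pst $ j" "0 \<le> c j * h $ j" using P c0 hn by auto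
    show "\<forall>t. 0 < t \<and> t \<le> Pst $ j \<longrightarrow> h $ j \<le> c j * S + c j * h $ j * t"
    proof (intro allI impI)
      fix t assume t: "0 < t \<and> t \<le> Pst $ j"
      have "feasible_power Pst (\<chi> k. if k = j then t else p $ k)"
        using pn t by (auto simp: feasible_power_def)
      from best[OF this] have "ln (S + h $ j * t) - (C + c j * t) \<le> ln S - C"
        using objq[of j t] objp pj by simp
      moreover have "1 - S / (S + h $ j * t) \<le> ln (S + h $ j * t) - ln S"
        using S1 hn t by (intro ln_lower) (auto intro!: add_pos_nonneg)
      moreover have Sq: "0 < S + h $ j * t" using S1 hn t
        by (metis add_pos_nonneg less_le_trans mult_nonneg_nonneg order_less_imp_le zero_less_one)
      moreover have "1 - S / (S + h $ j * t) = h $ j * t / (S + h $ j * t)"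
        using Sq by (simp add: field_simps)
      ultimately have "h $ j * t / (S + h $ j * t) \<le> c j * t" by simp
      with Sq have "h $ j * t \<le> c j * t * (S + h $ j * t)" by (simp add: divide_le_eq)
      hence "h $ j * t \<le> (c j * S + c j * h $ j * t) * t" by (simp add: algebra_simps)
      thus "h $ j \<le> c j * S + c j * h $ j * t" using t by simp
    qed
  qed
  have cl2: "c i * S \<le> h $ i"
  proof (rule lim_le[of "p $ i" "c i * h $ i"])
    show "0 < p $ i" "0 \<le> c i * h $ i" using pi c0 hn by auto
    show "\<forall>t. 0 < t \<and> t \<le> p $ i \<longrightarrow> c i * S \<le> h $ i + c i * h $ i * t"
    proof (intro allI impI)
      fix t assume t: "0 < t \<and> t \<le> p $ i"
      have "feasible_power Pst (\<chi> k. if k = i then p $ i - t else p $ k)"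
        using pn t by (auto simp: feasible_power_def intro: order_trans[OF _ pn(2)])
      from best[OF this] have "ln (S - h $ i * t) - (C - c i * t) \<le> ln S - C"
        using objq[of i "p $ i - t"] objp by simp
      moreover have Sp: "0 < S - h $ i * t"
      proof -
        have "h $ i * p $ i \<le> (\<Sum>k\<in>UNIV. h $ k * p $ k)"
          using hn pn by (intro member_le_sum) auto
        moreover have "h $ i * t \<le> h $ i * p $ i" using hn t by (simp add: mult_left_mono)
        ultimately show ?thesis unfolding S_def by linarith
      qed
      moreover have "1 - (S - h $ i * t) / S \<le> ln S - ln (S - h $ i * t)"
        using S1 Sp by (intro ln_lower) auto
      moreover have "ln S - ln (S - h $ i * t) \<le> S / (S - h $ i * t) - 1"
        using ln_le_minus_one[of "S / (S - h $ i * t)"] S1 Sp by (simp add: ln_div)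
      moreover have "S / (S - h $ i * t) - 1 = h $ i * t / (S - h $ i * t)"
        using Sp by (simp add: field_simps)
      ultimately have "c i * t \<le> h $ i * t / (S - h $ i * t)" by simp
      hence "c i * t * (S - h $ i * t) \<le> h $ i * t" using Sp by (simp add: le_divide_eq)
      hence "(c i * S) * t \<le> (h $ i + c i * h $ i * t) * t" by (simp add: algebra_simps)
      thus "c i * S \<le> h $ i + c i * h $ i * t" using t by simp
    qed
  qed
  show ?thesis
  proof (cases "c i = 0")
    case True thus ?thesis by (simp add: ediv_def c_def[symmetric])
  next
    case False
    hence ci: "0 < c i" using c0[of i] by simp
    have cj: "0 < c j"
    proof (rule ccontr)
      assume "\<not> 0 < c j"
      hence "c j = 0" using c0[of j] by simp
      with cl1 hn hz show False by (metis mult_zero_left order.antisym)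
    qed
    have "h $ j / c j \<le> S" using cl1 cj by (simp add: divide_le_eq mult.commute)
    also have "S \<le> h $ i / c i" using cl2 ci by (simp add: le_divide_eq mult.commute)
    finally show ?thesis using ci cj by (simp add: ediv_def c_def[symmetric])
  qed
qed


lemma meas_set:
  fixes \<alpha> :: "'a \<Rightarrow> (real^'k::finite) \<times> (real^('k \<times> 'm::finite))"
  assumes [measurable]: "\<alpha> \<in> borel_measurable M"
  shows "{\<omega> \<in> space M. (\<forall>k. fst (\<alpha> \<omega>) $ k \<le> a $ k) \<and> (\<forall>km. snd (\<alpha> \<omega>) $ km \<le> b $ km)} \<in> sets M"
proof -
  have [measurable]: "(\<lambda>x. fst (\<alpha> x) $ k) \<in> borel_measurable M" for k
  proof -
    have "(\<lambda>z::(real^'k) \<times> (real^('k \<times> 'm)). fst z $ k) \<in> borel_measurable borel"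
      by (intro borel_measurable_continuous_onI continuous_intros)
    from measurable_compose[OF assms this] show ?thesis by (simp add: o_def)
  qed
  have [measurable]: "(\<lambda>x. snd (\<alpha> x) $ k) \<in> borel_measurable M" for k
  proof -
    have "(\<lambda>z::(real^'k) \<times> (real^('k \<times> 'm)). snd z $ k) \<in> borel_measurable borel"
      by (intro borel_measurable_continuous_onI continuous_intros)
    from measurable_compose[OF assms this] show ?thesis by (simp add: o_def)
  qed
  show ?thesis by measurable
qed


lemma zero_null:
  fixes M :: "'a measure"
    and \<alpha> :: "'a \<Rightarrow> (real^'k::finite) \<times> (real^('k \<times> 'm::finite))"
  assumes ps: "prob_space M"
    and meas: "\<alpha> \<in> borel_measurable M"
    and nonneg: "\<forall>\<omega>\<in>space M. \<forall>i. 0 \<le> alpha_comp \<alpha> i \<omega>"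
    and cont: "continuous_on UNIV (joint_cdf M \<alpha>)"
  shows "AE \<omega> in M. \<forall>j. fst (\<alpha> \<omega>) $ j \<noteq> 0"
proof -
  interpret prob_space M by fact
  have nn: "\<And>\<omega> k. \<omega> \<in> space M \<Longrightarrow> 0 \<le> fst (\<alpha> \<omega>) $ k"
  proof -
    fix \<omega> k assume "\<omega> \<in> space M"
    hence "0 \<le> alpha_comp \<alpha> (Inl k) \<omega>" using nonneg by blast
    thus "0 \<le> fst (\<alpha> \<omega>) $ k" by (simp add: alpha_comp_def)
  qed
  define B where "B j n = {\<omega> \<in> space M. (\<forall>k. fst (\<alpha> \<omega>) $ k \<le> (\<chi> k. if k = j then 0 else real n) $ k)
      \<and> (\<forall>km. snd (\<alpha> \<omega>) $ km \<le> ((\<chi> km. real n) :: real^('k \<times> 'm)) $ km)}" for j n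
  have null: "B j n \<in> null_sets M" for j n
  proof -
    define z where "z = ((\<chi> k. if k = j then 0 else real n) :: real^'k, (\<chi> km. real n) :: real^('k \<times> 'm))"
    define w where "w i = (fst z - inverse (real (Suc i)) *\<^sub>R axis j 1, snd z)" for i
    have Fw: "joint_cdf M \<alpha> (w i) = 0" for i
    proof -
      have "{\<omega> \<in> space M. (\<forall>k. fst (\<alpha> \<omega>) $ k \<le> fst (w i) $ k) \<and> (\<forall>km. snd (\<alpha> \<omega>) $ km \<le> snd (w i) $ km)} = {}"
      proof safe
        fix \<omega> assume "\<omega> \<in> space M" "\<forall>k. fst (\<alpha> \<omega>) $ k \<le> fst (w i) $ k"
        hence "0 \<le> fst (w i) $ j" using nn by (metis order_trans)
        moreover have "fst (w i) $ j = - inverse (real (Suc i))" by (simp add: w_def z_def)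
        moreover have "0 < inverse (real (Suc i))" by simp
        ultimately show "\<omega> \<in> {}" by linarith
      qed
      thus ?thesis unfolding joint_cdf_def by (metis measure_empty)
    qed
    have "w \<longlonglongrightarrow> z"
    proof -
      have "(\<lambda>i. (fst z - inverse (real (Suc i)) *\<^sub>R axis j 1, snd z)) \<longlonglongrightarrow> (fst z - 0 *\<^sub>R axis j 1, snd z)"
        by (intro tendsto_intros LIMSEQ_inverse_real_of_nat)
      moreover have "w = (\<lambda>i. (fst z - inverse (real (Suc i)) *\<^sub>R axis j 1, snd z))"
        by (simp add: w_def fun_eq_iff)
      ultimately show ?thesis by simp
    qed
    hence "(\<lambda>i. joint_cdf M \<alpha> (w i)) \<longlonglongrightarrow> joint_cdf M \<alpha> z"
      by (intro continuous_on_tendsto_compose[OF cont]) auto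
    hence "joint_cdf M \<alpha> z = 0" using Fw by (simp add: LIMSEQ_const_iff)
    hence m0: "measure M (B j n) = 0" by (simp add: joint_cdf_def B_def z_def)
    have "B j n \<in> sets M" unfolding B_def by (rule meas_set[OF meas])
    with m0 show ?thesis by (simp add: emeasure_eq_measure null_sets_def)
  qed
  have "AE \<omega> in M. \<forall>j\<in>UNIV. \<forall>n. \<omega> \<notin> B j n"
  proof (rule AE_finite_allI)
    fix j :: 'k
    have "\<forall>n. AE \<omega> in M. \<omega> \<notin> B j n" using null AE_not_in by blast
    thus "AE \<omega> in M. \<forall>n. \<omega> \<notin> B j n" by (simp add: AE_all_countable)
  qed simp
  with AE_space show ?thesis
  proof (eventually_elim)
    case (elim \<omega>)
    show ?case
    proof (intro allI notI)
      fix j assume h0: "fst (\<alpha> \<omega>) $ j = 0"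
      define n where "n = nat \<lceil>norm (fst (\<alpha> \<omega>)) + norm (snd (\<alpha> \<omega>))\<rceil>"
      have nb: "norm (fst (\<alpha> \<omega>)) + norm (snd (\<alpha> \<omega>)) \<le> real n"
        unfolding n_def by (rule real_nat_ceiling_ge)
      have "\<omega> \<in> B j n"
        unfolding B_def
      proof (intro CollectI conjI allI)
        show "\<omega> \<in> space M" using elim by simp
        fix k
        have "fst (\<alpha> \<omega>) $ k \<le> real n"
          using component_le_norm_cart[of "fst (\<alpha> \<omega>)" k] nb norm_ge_zero[of "snd (\<alpha> \<omega>)"] by linarith
        thus "fst (\<alpha> \<omega>) $ k \<le> (\<chi> k. if k = j then 0 else real n) $ k" using h0 by auto
      next
        fix km
        show "snd (\<alpha> \<omega>) $ km \<le> ((\<chi> km. real n) :: real^('k \<times> 'm)) $ km"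
          using component_le_norm_cart[of "snd (\<alpha> \<omega>)" km] nb norm_ge_zero[of "fst (\<alpha> \<omega>)"] by (simp; linarith)
      qed
      with elim show False by auto
    qed
  qed
qed

theorem lemma3p4:
  fixes M :: "'a measure"
    and \<alpha> :: "'a \<Rightarrow> (real^'k::finite) \<times> (real^('k \<times> 'm::finite))"
    and \<mu> :: "real^'m" and Pst :: "real^'k"
  assumes "prob_space M"
    and "\<alpha> \<in> borel_measurable M"
    and "\<forall>\<omega>\<in>space M. \<forall>i. 0 \<le> alpha_comp \<alpha> i \<omega>"
    and "prob_space.indep_vars M (\<lambda>_. borel) (alpha_comp \<alpha>) UNIV"
    and "continuous_on UNIV (joint_cdf M \<alpha>)"
    and "\<forall>z. joint_cdf M \<alpha> differentiable (at z)"
    and "\<forall>m. 0 \<le> \<mu> $ m"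
    and "\<forall>k. 0 < Pst $ k"
  shows "AE \<omega> in M. \<forall>p i j.
           is_optimal \<mu> Pst (fst (\<alpha> \<omega>)) (snd (\<alpha> \<omega>)) p \<and> 0 < p $ i \<and> p $ j = 0 \<longrightarrow>
           ediv (fst (\<alpha> \<omega>) $ i) (\<Sum>m\<in>UNIV. \<mu> $ m * snd (\<alpha> \<omega>) $ (i, m))
             \<ge> ediv (fst (\<alpha> \<omega>) $ j) (\<Sum>m\<in>UNIV. \<mu> $ m * snd (\<alpha> \<omega>) $ (j, m))"
proof -
  from zero_null[OF assms(1,2,3,5)] show ?thesis
  proof (rule AE_mp)
    show "AE \<omega> in M. (\<forall>j. fst (\<alpha> \<omega>) $ j \<noteq> 0) \<longrightarrow> (\<forall>p i j.
           is_optimal \<mu> Pst (fst (\<alpha> \<omega>)) (snd (\<alpha> \<omega>)) p \<and> 0 < p $ i \<and> p $ j = 0 \<longrightarrow>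
           ediv (fst (\<alpha> \<omega>) $ i) (\<Sum>m\<in>UNIV. \<mu> $ m * snd (\<alpha> \<omega>) $ (i, m))
             \<ge> ediv (fst (\<alpha> \<omega>) $ j) (\<Sum>m\<in>UNIV. \<mu> $ m * snd (\<alpha> \<omega>) $ (j, m)))"
    proof (rule AE_I2, intro impI allI)
      fix \<omega> p i j
      assume \<omega>: "\<omega> \<in> space M" and hz: "\<forall>j. fst (\<alpha> \<omega>) $ j \<noteq> 0"
        and c: "is_optimal \<mu> Pst (fst (\<alpha> \<omega>)) (snd (\<alpha> \<omega>)) p \<and> 0 < p $ i \<and> p $ j = 0"
      have hn: "\<forall>k. 0 \<le> fst (\<alpha> \<omega>) $ k"
      proof
        fix k have "0 \<le> alpha_comp \<alpha> (Inl k) \<omega>" using assms(3) \<omega> by blast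
        thus "0 \<le> fst (\<alpha> \<omega>) $ k" by (simp add: alpha_comp_def)
      qed
      have gn: "\<forall>km. 0 \<le> snd (\<alpha> \<omega>) $ km"
      proof
        fix km have "0 \<le> alpha_comp \<alpha> (Inr km) \<omega>" using assms(3) \<omega> by blast
        thus "0 \<le> snd (\<alpha> \<omega>) $ km" by (simp add: alpha_comp_def)
      qed
      show "ediv (fst (\<alpha> \<omega>) $ i) (\<Sum>m\<in>UNIV. \<mu> $ m * snd (\<alpha> \<omega>) $ (i, m))
             \<ge> ediv (fst (\<alpha> \<omega>) $ j) (\<Sum>m\<in>UNIV. \<mu> $ m * snd (\<alpha> \<omega>) $ (j, m))"
        using det[OF hn gn assms(7) assms(8) hz] c by blast
    qed
  qed
qed

end
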